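(* Consider a two-user ($N=2$) multi-hop decode-and-forward relay network with $L\ge 2$ hops and a fixed relay assignment, with powers, SINRs and sum-rate as defined in the context. Then there exists a power allocation $\mathbf{P}^*=(P_{i,l}^* )_{i\in\{1,2\},\,l\in\{0,\dots,L-1\}}\in[0,P]^{2L}$ that maximizes the sum-rate $R(\mathbf{P})=\sum_{i=1}^{2}\log_2\!\big(1+\min_{l\in\{1,\dots,L\}}\gamma_{i,l}(\mathbf{P})\big)$ over $[0,P]^{2L}$ and satisfies, for each user $i\in\{1,2\}$, $\gamma_{i,1}(\mathbf{P}^* )=\gamma_{i,2}(\mathbf{P}^* )=\cdots=\gamma_{i,L}(\mathbf{P}^* )$; i.e., the SINRs of each user are equal in all hops.
   Context: Setup: there are two source–destination (S-D) pairs (users) $i\in\{1,2\}$, whose information travels over $L$ hops. For a fixed relay assignment, user $i$ uses a path of nodes $r_{i,0},r_{i,1},\dots,r_{i,L}$ (source $r_{i,0}$, destination $r_{i,L}$, distinct relays of the two users in each intermediate hop). In hop $l\in\{1,\dots,L\}$ the two transmitting nodes $r_{1,l-1},r_{2,l-1}$ transmit simultaneously with powers $P_{1,l-1},P_{2,l-1}\in[0,P]$, where $P>0$ is the maximum transmit power. Let $g_{j,i,l}=|h[r_{j,l-1},r_{i,l},l]|^2>0$ denote the channel power gain from the transmitter of user $j$ to the receiver of user $i$ in hop $l$, and let $\sigma^2>0$ be the noise variance. The SINR of user $i$ in hop $l$ (interference treated as noise, $j\neq i$ the other user) is $\gamma_{i,l}(\mathbf{P})=\dfrac{P_{i,l-1}\,g_{i,i,l}}{\sigma^2+P_{j,l-1}\,g_{j,i,l}}$.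 The end-to-end SINR of user $i$ is $\min_{l\in\{1,\dots,L\}}\gamma_{i,l}$ and the sum-rate is $R(\mathbf{P})=\sum_{i=1}^{2}\log_2(1+\min_{l}\gamma_{i,l}(\mathbf{P}))$. *)

theory Defs
  imports "HOL-Analysis.Analysis"
begin

text \<open>Hops l range over {1..L}; transmit powers are indexed Pw i (l-1), l-1 in {0..L-1}.
  g j i l is the channel power gain from the transmitter of user j to the receiver
  of user i in hop l (for the fixed relay assignment).\<close>

definition other :: "nat \<Rightarrow> nat" where
  "other i = 3 - i"

definition sinr :: "(nat \<Rightarrow> nat \<Rightarrow> nat \<Rightarrow> real) \<Rightarrow> real \<Rightarrow> (nat \<Rightarrow> nat \<Rightarrow> real) \<Rightarrow> nat \<Rightarrow> nat \<Rightarrow> real" where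
  "sinr g \<sigma>2 Pw i l =
     Pw i (l - 1) * g i i l / (\<sigma>2 + Pw (other i) (l - 1) * g (other i) i l)"

definition e2e_sinr :: "nat \<Rightarrow> (nat \<Rightarrow> nat \<Rightarrow> nat \<Rightarrow> real) \<Rightarrow> real \<Rightarrow> (nat \<Rightarrow> nat \<Rightarrow> real) \<Rightarrow> nat \<Rightarrow> real" where
  "e2e_sinr L g \<sigma>2 Pw i = Min ((\<lambda>l. sinr g \<sigma>2 Pw i l) ` {1..L})"

definition sum_rate :: "nat \<Rightarrow> (nat \<Rightarrow> nat \<Rightarrow> nat \<Rightarrow> real) \<Rightarrow> real \<Rightarrow> (nat \<Rightarrow> nat \<Rightarrow> real) \<Rightarrow> real" where
  "sum_rate L g \<sigma>2 Pw = (\<Sum>i\<in>{1,2}. log 2 (1 + e2e_sinr L g \<sigma>2 Pw i))"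

text \<open>Entries outside this index range are irrelevant; we fix them to 0 so the
  feasible set corresponds exactly to [0,P]^{2L}.\<close>

definition feasible :: "nat \<Rightarrow> real \<Rightarrow> (nat \<Rightarrow> nat \<Rightarrow> real) \<Rightarrow> bool" where
  "feasible L Pmax Pw \<longleftrightarrow>
     (\<forall>i\<in>{1,2}. \<forall>l<L. 0 \<le> Pw i l \<and> Pw i l \<le> Pmax) \<and>
     (\<forall>i l. (i \<notin> {1,2} \<or> l \<ge> L) \<longrightarrow> Pw i l = 0)"

end

theory Submission imports Defs begin

lemma compact_PiE_UNIV:
  fixes S :: "'i \<Rightarrow> ('b::topological_space) set"
  assumes "\<And>i. compact (S i)"
  shows "compact (PiE UNIV S)"
proof -
  have "compactin (product_topology (\<lambda>i. euclidean) UNIV) (PiE UNIV S)"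
    using assms by (simp add: compactin_PiE)
  then show ?thesis by (simp add: euclidean_product_topology)
qed

definition Bx :: "nat \<Rightarrow> real \<Rightarrow> nat \<Rightarrow> nat \<Rightarrow> real set" where
  "Bx L Pmax i l = (if i \<in> {1,2} \<and> l < L then {0..Pmax} else {0})"

lemma feasible_iff: "feasible L Pmax x \<longleftrightarrow> (\<forall>i l. x i l \<in> Bx L Pmax i l)"
proof
  assume "feasible L Pmax x" then show "\<forall>i l. x i l \<in> Bx L Pmax i l"
    unfolding feasible_def Bx_def by auto
next
  assume a: "\<forall>i l. x i l \<in> Bx L Pmax i l"
  show "feasible L Pmax x" unfolding feasible_def
  proof (intro conjI ballI allI impI)
    fix i l :: nat assume "i \<in> {1,2}" "l < L" then show "0 \<le> x i l" "x i l \<le> Pmax"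
      using a[rule_format, of i l] unfolding Bx_def by auto
  next
    fix i l :: nat assume "i \<notin> {1,2} \<or> L \<le> l" then show "x i l = 0"
      using a[rule_format, of i l] unfolding Bx_def by auto
  qed
qed

lemma feasible_set:
  "{Pw. feasible L Pmax Pw} = PiE UNIV (\<lambda>i. PiE UNIV (\<lambda>l. Bx L Pmax i l))"
  by (auto simp: feasible_iff PiE_UNIV_domain Pi_iff)

lemma compact_feasible: "compact {Pw. feasible L Pmax Pw}"
  unfolding feasible_set
  by (intro compact_PiE_UNIV) (simp add: Bx_def)

lemma continuous_Min_img:
  fixes f :: "'i \<Rightarrow> 'a::topological_space \<Rightarrow> real"
  assumes "finite A" "A \<noteq> {}" "\<And>l. l \<in> A \<Longrightarrow> continuous_on S (f l)"
  shows "continuous_on S (\<lambda>x. Min ((\<lambda>l. f l x) ` A))"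
  using assms
proof (induction A rule: finite_ne_induct)
  case (singleton x) then show ?case by simp
next
  case (insert a B)
  have "continuous_on S (\<lambda>x. min (f a x) (Min ((\<lambda>l. f l x) ` B)))"
    using insert by (intro continuous_on_min) auto
  moreover have "\<And>x. Min ((\<lambda>l. f l x) ` insert a B) = min (f a x) (Min ((\<lambda>l. f l x) ` B))"
    using insert by simp
  ultimately show ?case by simp
qed


lemma feasible_bounds:
  assumes "feasible L Pmax x" "Pmax > 0"
  shows "0 \<le> x i l" "x i l \<le> Pmax"
  using assms(1)[unfolded feasible_iff, rule_format, of i l] assms(2)
  by (auto simp: Bx_def split: if_splits)

lemma coord_cont: "continuous_on S (\<lambda>x::'a\<Rightarrow>'b\<Rightarrow>real. x i m)"
proof -
  have "continuous_on S (\<lambda>x::'a\<Rightarrow>'b\<Rightarrow>real. x i)"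
    by (rule continuous_on_product_then_coordinatewise[OF continuous_on_id])
  then show ?thesis by (rule continuous_on_product_then_coordinatewise)
qed

lemma other_simps [simp]: "other 1 = 2" "other 2 = 1" "other (Suc 0) = 2"
  by (simp_all add: other_def)

lemma hop_equalize:
  fixes a b c d s t1 t2 q1 q2 :: real
  assumes pos: "a > 0" "b > 0" "c > 0" "d > 0" "s > 0"
    and nn: "t1 \<ge> 0" "t2 \<ge> 0" "q1 \<ge> 0" "q2 \<ge> 0"
    and le1: "t1 \<le> q1 * a / (s + q2 * b)" and le2: "t2 \<le> q2 * c / (s + q1 * d)"
  shows "\<exists>p1 p2. 0 \<le> p1 \<and> p1 \<le> q1 \<and> 0 \<le> p2 \<and> p2 \<le> q2 \<and>
           p1 * a / (s + p2 * b) = t1 \<and> p2 * c / (s + p1 * d) = t2"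
proof -
  have den1: "s + q2 * b > 0" using pos nn by (simp add: add_pos_nonneg)
  have den2: "s + q1 * d > 0" using pos nn by (simp add: add_pos_nonneg)
  have h1: "t1 * (s + q2 * b) \<le> q1 * a" using le1 den1 by (simp add: le_divide_eq)
  have h2: "t2 * (s + q1 * d) \<le> q2 * c" using le2 den2 by (simp add: le_divide_eq)
  define D where "D = a * c - t1 * t2 * b * d"
  have k1: "t1 * s * (c + t2 * b) \<le> q1 * D"
  proof -
    have "t1 * b * (t2 * (s + q1 * d)) \<le> t1 * b * (q2 * c)"
      using h2 nn pos by (intro mult_left_mono) auto
    moreover have "c * (t1 * (s + q2 * b)) \<le> c * (q1 * a)"
      using h1 pos by (intro mult_left_mono) auto
    ultimately show ?thesis unfolding D_def by (simp add: algebra_simps)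
  qed
  have k2: "t2 * s * (a + t1 * d) \<le> q2 * D"
  proof -
    have "t2 * d * (t1 * (s + q2 * b)) \<le> t2 * d * (q1 * a)"
      using h1 nn pos by (intro mult_left_mono) auto
    moreover have "a * (t2 * (s + q1 * d)) \<le> a * (q2 * c)"
      using h2 pos by (intro mult_left_mono) auto
    ultimately show ?thesis unfolding D_def by (simp add: algebra_simps)
  qed
  have Dpos: "D > 0"
  proof (cases "t1 = 0 \<or> t2 = 0")
    case True then show ?thesis using pos unfolding D_def by auto
  next
    case False
    then have "t1 > 0" "t2 > 0" using nn by auto
    then have "t1 * s * (c + t2 * b) > 0" using pos
      by (intro mult_pos_pos add_pos_pos) auto
    then have "q1 * D > 0" using k1 by linarith
    then show ?thesis using nn(3) by (simp add: zero_less_mult_iff)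
  qed
  define p1 where "p1 = t1 * s * (c + t2 * b) / D"
  define p2 where "p2 = t2 * s * (a + t1 * d) / D"
  have p1nn: "0 \<le> p1" unfolding p1_def using Dpos pos nn by simp
  have p2nn: "0 \<le> p2" unfolding p2_def using Dpos pos nn by simp
  have p1le: "p1 \<le> q1" unfolding p1_def using Dpos k1 by (simp add: divide_le_eq)
  have p2le: "p2 \<le> q2" unfolding p2_def using Dpos k2 by (simp add: divide_le_eq)
  have e1a: "s + p2 * b = (s * D + t2 * s * (a + t1 * d) * b) / D"
    unfolding p2_def using Dpos by (simp add: field_simps)
  have e1b: "s * D + t2 * s * (a + t1 * d) * b = s * a * (c + t2 * b)"
    unfolding D_def by (simp add: algebra_simps)
  have e1: "s + p2 * b = s * a * (c + t2 * b) / D" using e1a e1b by simp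
  have e2a: "s + p1 * d = (s * D + t1 * s * (c + t2 * b) * d) / D"
    unfolding p1_def using Dpos by (simp add: field_simps)
  have e2b: "s * D + t1 * s * (c + t2 * b) * d = s * c * (a + t1 * d)"
    unfolding D_def by (simp add: algebra_simps)
  have e2: "s + p1 * d = s * c * (a + t1 * d) / D" using e2a e2b by simp
  have Y1: "s * a * (c + t2 * b) / D > 0" using Dpos pos nn by (simp add: add_pos_nonneg)
  have Y2: "s * c * (a + t1 * d) / D > 0" using Dpos pos nn by (simp add: add_pos_nonneg)
  have m1: "p1 * a = t1 * (s * a * (c + t2 * b) / D)" unfolding p1_def by simp
  have m2: "p2 * c = t2 * (s * c * (a + t1 * d) / D)" unfolding p2_def by simp
  have "p1 * a / (s + p2 * b) = t1" unfolding e1 m1 by (intro nonzero_mult_div_cancel_right) (use Y1 in linarith)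
  moreover have "p2 * c / (s + p1 * d) = t2" unfolding e2 m2 by (intro nonzero_mult_div_cancel_right) (use Y2 in linarith)
  ultimately show ?thesis using p1nn p2nn p1le p2le by blast
qed


theorem lemma1:
  fixes L :: nat and Pmax \<sigma>2 :: real and g :: "nat \<Rightarrow> nat \<Rightarrow> nat \<Rightarrow> real"
  assumes "L \<ge> 2" and "Pmax > 0" and "\<sigma>2 > 0"
    and "\<And>j i l. j \<in> {1,2} \<Longrightarrow> i \<in> {1,2} \<Longrightarrow> l \<in> {1..L} \<Longrightarrow> g j i l > 0"
  shows "\<exists>Pstar. feasible L Pmax Pstar \<and>
           (\<forall>Pw. feasible L Pmax Pw \<longrightarrow> sum_rate L g \<sigma>2 Pw \<le> sum_rate L g \<sigma>2 Pstar) \<and>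
           (\<forall>i\<in>{1,2}. \<forall>l\<in>{1..L}. sinr g \<sigma>2 Pstar i l = sinr g \<sigma>2 Pstar i 1)"
proof -
  note gpos = assms(4)
  define F where "F = {Pw. feasible L Pmax Pw}"
  have oth: "other i \<in> {1,2}" if "i \<in> {1,2}" for i using that by auto
  have den_pos: "\<sigma>2 + Pw (other i) (l - 1) * g (other i) i l > 0"
    if "feasible L Pmax Pw" "i \<in> {1,2}" "l \<in> {1..L}" for Pw i l
  proof -
    have "0 \<le> Pw (other i) (l - 1) * g (other i) i l"
      using feasible_bounds(1)[OF that(1) assms(2)] gpos[OF oth[OF that(2)] that(2) that(3)]
      by simp
    then show ?thesis using assms(3) by linarith
  qed
  have sinr_nn: "0 \<le> sinr g \<sigma>2 Pw i l"
    if "feasible L Pmax Pw" "i \<in> {1,2}" "l \<in> {1..L}" for Pw i l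
    unfolding sinr_def using den_pos[OF that] feasible_bounds(1)[OF that(1) assms(2)]
      gpos[OF that(2) that(2) that(3)] by simp
  have e2e_nn: "0 \<le> e2e_sinr L g \<sigma>2 Pw i"
    if "feasible L Pmax Pw" "i \<in> {1,2}" for Pw i
    unfolding e2e_sinr_def using assms(1) sinr_nn[OF that] by (subst Min_ge_iff) auto
  have cont_sinr: "continuous_on F (\<lambda>Pw. sinr g \<sigma>2 Pw i l)"
    if "i \<in> {1,2}" "l \<in> {1..L}" for i l
  proof -
    have nz: "\<forall>Pw\<in>F. \<sigma>2 + Pw (other i) (l - 1) * g (other i) i l \<noteq> 0"
      unfolding F_def by (intro ballI) (metis den_pos[OF _ that] less_irrefl mem_Collect_eq)
    show ?thesis unfolding sinr_def
      by (intro continuous_intros coord_cont) (use nz in auto)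
  qed
  have cont_e2e: "continuous_on F (\<lambda>Pw. e2e_sinr L g \<sigma>2 Pw i)" if "i \<in> {1,2}" for i
    unfolding e2e_sinr_def using assms(1) cont_sinr[OF that]
    by (intro continuous_Min_img) auto
  have sr: "sum_rate L g \<sigma>2 Pw = log 2 (1 + e2e_sinr L g \<sigma>2 Pw 1) + log 2 (1 + e2e_sinr L g \<sigma>2 Pw 2)"
    for Pw unfolding sum_rate_def by simp
  have cont: "continuous_on F (sum_rate L g \<sigma>2)"
  proof -
    have p: "\<forall>x\<in>F. 0 < 1 + e2e_sinr L g \<sigma>2 x i" if "i \<in> {1,2}" for i
    proof
      fix x assume "x \<in> F"
      then have "0 \<le> e2e_sinr L g \<sigma>2 x i" using e2e_nn that by (simp add: F_def)
      then show "0 < 1 + e2e_sinr L g \<sigma>2 x i" by simp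
    qed
    have "continuous_on F (\<lambda>Pw. log 2 (1 + e2e_sinr L g \<sigma>2 Pw 1) + log 2 (1 + e2e_sinr L g \<sigma>2 Pw 2))"
      using cont_e2e[of 1] cont_e2e[of 2] p[of 1] p[of 2]
      by (intro continuous_intros) auto
    then show ?thesis using sr by simp
  qed
  have Fne: "F \<noteq> {}"
  proof -
    have "feasible L Pmax (\<lambda>_ _. 0)" unfolding feasible_def using assms(2) by auto
    then show ?thesis unfolding F_def by auto
  qed
  obtain P0 where P0F: "P0 \<in> F" and P0max: "\<And>Pw. Pw \<in> F \<Longrightarrow> sum_rate L g \<sigma>2 Pw \<le> sum_rate L g \<sigma>2 P0"
    using continuous_attains_sup[OF compact_feasible[of L Pmax, folded F_def] Fne cont] by blast
  have P0f: "feasible L Pmax P0" using P0F by (simp add: F_def)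
  define t where "t i = e2e_sinr L g \<sigma>2 P0 i" for i
  have t_le: "t i \<le> sinr g \<sigma>2 P0 i l" if "l \<in> {1..L}" for i l
    unfolding t_def e2e_sinr_def using that by (intro Min_le) auto
  have t_nn: "0 \<le> t i" if "i \<in> {1,2}" for i unfolding t_def using e2e_nn[OF P0f that] .
  have "\<forall>l\<in>{1..L}. \<exists>pp. 0 \<le> fst pp \<and> fst pp \<le> P0 1 (l-1) \<and> 0 \<le> snd pp \<and> snd pp \<le> P0 2 (l-1) \<and>
           fst pp * g 1 1 l / (\<sigma>2 + snd pp * g 2 1 l) = t 1 \<and>
           snd pp * g 2 2 l / (\<sigma>2 + fst pp * g 1 2 l) = t 2"
  proof
    fix l assume l: "l \<in> {1..L}"
    have "\<exists>p1 p2. 0 \<le> p1 \<and> p1 \<le> P0 1 (l-1) \<and> 0 \<le> p2 \<and> p2 \<le> P0 2 (l-1) \<and>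
           p1 * g 1 1 l / (\<sigma>2 + p2 * g 2 1 l) = t 1 \<and> p2 * g 2 2 l / (\<sigma>2 + p1 * g 1 2 l) = t 2"
      apply (rule hop_equalize)
      using gpos l assms(3) t_nn feasible_bounds(1)[OF P0f assms(2)]
        t_le[OF l, of 1] t_le[OF l, of 2]
      by (auto simp: sinr_def)
    then show "\<exists>pp. 0 \<le> fst pp \<and> fst pp \<le> P0 1 (l-1) \<and> 0 \<le> snd pp \<and> snd pp \<le> P0 2 (l-1) \<and>
           fst pp * g 1 1 l / (\<sigma>2 + snd pp * g 2 1 l) = t 1 \<and>
           snd pp * g 2 2 l / (\<sigma>2 + fst pp * g 1 2 l) = t 2"
      by (metis fst_conv snd_conv)
  qed
  then obtain pp where pp: "\<And>l. l \<in> {1..L} \<Longrightarrow> 0 \<le> fst (pp l) \<and> fst (pp l) \<le> P0 1 (l-1) \<and> 0 \<le> snd (pp l) \<and> snd (pp l) \<le> P0 2 (l-1) \<and>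
           fst (pp l) * g 1 1 l / (\<sigma>2 + snd (pp l) * g 2 1 l) = t 1 \<and>
           snd (pp l) * g 2 2 l / (\<sigma>2 + fst (pp l) * g 1 2 l) = t 2"
    by metis
  define Ps :: "nat \<Rightarrow> nat \<Rightarrow> real" where "Ps i m = (if m < L then (if i = 1 then fst (pp (m+1)) else if i = 2 then snd (pp (m+1)) else 0) else 0)" for i m
  have Psf: "feasible L Pmax Ps"
    unfolding feasible_def
  proof (intro conjI ballI allI impI)
    fix i m :: nat assume i: "i \<in> {1,2}" and m: "m < L"
    have m1: "m + 1 \<in> {1..L}" "m + 1 - 1 = m" using m by auto
    show "0 \<le> Ps i m" "Ps i m \<le> Pmax"
      using pp[OF m1(1)] i m feasible_bounds(2)[OF P0f assms(2), of 1 m]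
        feasible_bounds(2)[OF P0f assms(2), of 2 m]
      by (auto simp: Ps_def)
  next
    fix i m :: nat assume "i \<notin> {1,2} \<or> L \<le> m"
    then show "Ps i m = 0" by (auto simp: Ps_def)
  qed
  have sinr_Ps: "sinr g \<sigma>2 Ps i l = t i" if i: "i \<in> {1,2}" and l: "l \<in> {1..L}" for i l
  proof -
    have "l - 1 < L" "l - 1 + 1 = l" using l by auto
    then show ?thesis using pp[OF l] i unfolding sinr_def Ps_def by auto
  qed
  have e2e_Ps: "e2e_sinr L g \<sigma>2 Ps i = t i" if i: "i \<in> {1,2}" for i
  proof -
    have "(\<lambda>l. sinr g \<sigma>2 Ps i l) ` {1..L} = {t i}"
      using sinr_Ps[OF i] assms(1) by (auto intro: image_eqI[of _ _ 1])
    then show ?thesis unfolding e2e_sinr_def by simp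
  qed
  have "sum_rate L g \<sigma>2 Ps = sum_rate L g \<sigma>2 P0"
    unfolding sr using e2e_Ps[of 1] e2e_Ps[of 2] by (simp add: t_def)
  then have opt: "\<forall>Pw. feasible L Pmax Pw \<longrightarrow> sum_rate L g \<sigma>2 Pw \<le> sum_rate L g \<sigma>2 Ps"
    using P0max by (simp add: F_def)
  have eq: "\<forall>i\<in>{1,2}. \<forall>l\<in>{1..L}. sinr g \<sigma>2 Ps i l = sinr g \<sigma>2 Ps i 1"
    using sinr_Ps assms(1) by simp
  show ?thesis using Psf opt eq by blast
qed

end
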